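(* Assume (A1)–(A4). For the noisy ADMM iterates, let $E_k^\delta=\rho_1\|Ax_k^\delta-b^\delta\|^2+\rho_2\|Wx_k^\delta-y_k^\delta\|^2+\rho_2\|y_k^\delta-y_{k-1}^\delta\|^2$ for $k\ge1$. Then for all $k\ge1$ $$E_{k+1}^\delta-E_k^\delta\le-\rho_1\|A(x_{k+1}^\delta-x_k^\delta)\|^2-4c_0\|y_{k+1}^\delta-y_k^\delta\|^2.$$ Consequently $\{E_k^\delta\}$ is monotonically nonincreasing, and for all integers $1\le m<n$, $$\sum_{k=m}^{n-1}\|y_{k+1}^\delta-y_k^\delta\|^2\le\frac{1}{4c_0}E_m^\delta,\qquad (n-m)\rho_2\|y_n^\delta-y_{n-1}^\delta\|^2\le\sum_{k=m+1}^nE_k^\delta.$$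
   Context: $\mathcal X,\mathcal Y,\mathcal H$ are real Hilbert spaces. Standing assumptions: (A1) $A:\mathcal X\to\mathcal H$ is bounded linear. (A2) $f:\mathcal Y\to(-\infty,\infty]$ is proper, lower semicontinuous and strongly convex with constant $c_0>0$: $f(ty_1+(1-t)y_2)+c_0t(1-t)\|y_1-y_2\|^2\le tf(y_1)+(1-t)f(y_2)$ for all $y_1,y_2$, $t\in[0,1]$. (A3) $W:\mathscr D(W)\subset\mathcal X\to\mathcal Y$ is a densely defined closed linear operator. (A4) There is $c_1>0$ with $\|Ax\|^2+\|Wx\|^2\ge c_1\|x\|^2$ for all $x\in\mathscr D(W)$. Noisy ADMM: given $b^\delta\in\mathcal H$, fix $\rho_1,\rho_2>0$ and initial $y_0^\delta\in\mathcal Y$, $\lambda_0^\delta\in\mathcal H$, $\mu_0^\delta\in\mathcal Y$. For $k=0,1,\dots$: $x_{k+1}^\delta=\arg\min_{x\in\mathscr D(W)}\{\langle\lambda_k^\delta,Ax\rangle+\langle\mu_k^\delta,Wx\rangle+\frac{\rho_1}{2}\|Ax-b^\delta\|^2+\frac{\rho_2}{2}\|Wx-y_k^\delta\|^2\}$, $y_{k+1}^\delta=\arg\min_{y\in\mathcal Y}\{f(y)-\langle\mu_k^\delta,y\rangle+\frac{\rho_2}{2}\|Wx_{k+1}^\delta-y\|^2\}$, $\lambda_{k+1}^\delta=\lambda_k^\delta+\rho_1(Ax_{k+1}^\delta-b^\delta)$, $\mu_{k+1}^\delta=\mu_k^\delta+\rho_2(Wx_{k+1}^\delta-y_{k+1}^\delta)$.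 (These minimizers exist and are unique.) *)

theory Defs
  imports "HOL-Analysis.Analysis"
begin

definition proper_fun :: "('b \<Rightarrow> ereal) \<Rightarrow> bool" where
  "proper_fun f \<longleftrightarrow> (\<forall>y. f y \<noteq> -\<infinity>) \<and> (\<exists>y. f y \<noteq> \<infinity>)"

definition lsc_fun :: "('b::topological_space \<Rightarrow> ereal) \<Rightarrow> bool" where
  "lsc_fun f \<longleftrightarrow> (\<forall>c::ereal. closed {y. f y \<le> c})"

definition strongly_convex_with :: "('b::real_normed_vector \<Rightarrow> ereal) \<Rightarrow> real \<Rightarrow> bool" where
  "strongly_convex_with f c0 \<longleftrightarrow>
     (\<forall>y1 y2 t. 0 \<le> t \<and> t \<le> 1 \<longrightarrow>
        f (t *\<^sub>R y1 + (1 - t) *\<^sub>R y2) + ereal (c0 * t * (1 - t) * (norm (y1 - y2))\<^sup>2)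
          \<le> ereal t * f y1 + ereal (1 - t) * f y2)"

definition densely_defined_closed_linear ::
  "'a::real_normed_vector set \<Rightarrow> ('a \<Rightarrow> 'b::real_normed_vector) \<Rightarrow> bool" where
  "densely_defined_closed_linear D W \<longleftrightarrow>
     subspace D \<and>
     (\<forall>x\<in>D. \<forall>z\<in>D. W (x + z) = W x + W z) \<and>
     (\<forall>x\<in>D. \<forall>c::real. W (c *\<^sub>R x) = c *\<^sub>R W x) \<and>
     closure D = UNIV \<and>
     closed {(x, W x) | x. x \<in> D}"

text \<open>The energy \<open>E_k\<close> (used for \<open>k \<ge> 1\<close>).\<close>

definition admm_E ::
  "('a \<Rightarrow> 'h::real_normed_vector) \<Rightarrow> ('a \<Rightarrow> 'b::real_normed_vector) \<Rightarrow> 'h \<Rightarrow> real \<Rightarrow> real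
    \<Rightarrow> (nat \<Rightarrow> 'a) \<Rightarrow> (nat \<Rightarrow> 'b) \<Rightarrow> nat \<Rightarrow> real" where
  "admm_E A W b \<rho>1 \<rho>2 x y k =
     \<rho>1 * (norm (A (x k) - b))\<^sup>2 + \<rho>2 * (norm (W (x k) - y k))\<^sup>2
     + \<rho>2 * (norm (y k - y (k - 1)))\<^sup>2"

end

theory Submission
  imports Defs
begin

lemma norm_add_scale: fixes u v :: "'a::real_inner"
  shows "(norm (u + t *\<^sub>R v))\<^sup>2 = (norm u)\<^sup>2 + 2*t*inner u v + t^2*(norm v)\<^sup>2"
  unfolding power2_norm_eq_inner
  by (simp add: inner_add_left inner_add_right inner_commute power2_eq_square algebra_simps)

lemma key_alg: fixes r1 r0 :: "'h::real_inner" and a b c e :: "'y::real_inner" and \<rho>1 \<rho>2 c0 :: real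
  assumes h1: "\<rho>1 * inner r1 (r1 - r0) + \<rho>2 * inner (a + c - e) (a - b + c) = 0"
    and h2: "\<rho>2 * inner a c \<ge> 2*c0*(norm c)\<^sup>2" and r: "\<rho>2 > 0"
  shows "\<rho>1*(norm r1)\<^sup>2 + \<rho>2*(norm a)\<^sup>2 + \<rho>2*(norm c)\<^sup>2 - (\<rho>1*(norm r0)\<^sup>2 + \<rho>2*(norm b)\<^sup>2 + \<rho>2*(norm e)\<^sup>2)
     \<le> - \<rho>1*(norm (r1 - r0))\<^sup>2 - 4*c0*(norm c)\<^sup>2"
proof -
  have n: "0 \<le> \<rho>2 * (norm (a - b + c - e))\<^sup>2" using r by simp
  have i1: "2 * inner r1 (r1 - r0) = (norm r1)\<^sup>2 - (norm r0)\<^sup>2 + (norm (r1 - r0))\<^sup>2"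
    unfolding power2_norm_eq_inner by (simp add: inner_diff_left inner_diff_right inner_commute)
  have i2: "(norm a)\<^sup>2 - (norm b)\<^sup>2 + (norm c)\<^sup>2 - (norm e)\<^sup>2 - 2 * inner (a + c - e) (a - b + c)
      = - (norm (a - b + c - e))\<^sup>2 - 2 * inner a c"
    unfolding power2_norm_eq_inner by (simp add: inner_diff_left inner_diff_right inner_add_left inner_add_right inner_commute)
  have e1: "\<rho>1 * (2 * inner r1 (r1 - r0)) = \<rho>1 * ((norm r1)\<^sup>2 - (norm r0)\<^sup>2 + (norm (r1 - r0))\<^sup>2)" using i1 by simp
  have e2: "\<rho>2 * ((norm a)\<^sup>2 - (norm b)\<^sup>2 + (norm c)\<^sup>2 - (norm e)\<^sup>2 - 2 * inner (a + c - e) (a - b + c))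
      = \<rho>2 * (- (norm (a - b + c - e))\<^sup>2 - 2 * inner a c)" using i2 by simp
  show ?thesis using e1 e2 h1 h2 n unfolding ring_distribs by linarith
qed

lemma quad_zero: fixes L Q :: real assumes "\<forall>t. 0 \<le> t*L + t^2*Q" shows "L = 0"
proof (rule ccontr)
  assume "L \<noteq> 0"
  define d where "d = 2*\<bar>Q\<bar> + 1"
  have d: "d > 0" "\<bar>Q\<bar> \<le> d/2" by (auto simp: d_def)
  define t where "t = - L / d"
  have "0 \<le> t*L + t^2*Q" using assms by blast
  also have "t^2*Q \<le> t^2 * (d/2)" using d by (intro mult_left_mono) auto
  hence "t*L + t^2*Q \<le> t*L + t^2*(d/2)" by simp
  also have "t*L + t^2*(d/2) = (-(L^2))/(2*d)" using d by (simp add: t_def field_simps power2_eq_square)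
  also have "\<dots> < 0" using d \<open>L \<noteq> 0\<close> by simp
  finally show False by simp
qed

lemma small_lim: fixes G K :: real assumes "\<And>t. 0 < t \<Longrightarrow> t \<le> 1 \<Longrightarrow> 0 \<le> G + t*K" "K \<ge> 0" shows "0 \<le> G"
proof (rule ccontr)
  assume "\<not> 0 \<le> G"
  define t where "t = min 1 (-G/(2*K+1))"
  have "G/(2*K+1) < 0" using \<open>\<not> 0 \<le> G\<close> assms(2) by (simp add: divide_neg_pos)
  hence t: "0 < t" "t \<le> 1" "t \<le> -G/(2*K+1)" by (auto simp: t_def)
  have "t*K \<le> (-G/(2*K+1))*K" using t assms(2) by (intro mult_right_mono) auto
  also have "\<dots> < -G"
  proof -
    have "2*K+1 > 0" "(-G/(2*K+1))*K = -G * (K/(2*K+1))" "K/(2*K+1) < 1" using assms(2) by auto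
    moreover have "-G > 0" using \<open>\<not> 0 \<le> G\<close> by simp
    ultimately show ?thesis by (metis mult.right_neutral mult_strict_left_mono)
  qed
  finally have "G + t*K < 0" by simp
  with assms(1)[OF t(1,2)] show False by simp
qed

theorem lemma2p9:
  fixes A :: "'x::{real_inner,complete_space} \<Rightarrow> 'h::{real_inner,complete_space}"
    and W :: "'x \<Rightarrow> 'y::{real_inner,complete_space}"
    and D :: "'x set"
    and f :: "'y \<Rightarrow> ereal"
    and c0 c1 \<rho>1 \<rho>2 :: real
    and b :: 'h
    and x :: "nat \<Rightarrow> 'x" and y :: "nat \<Rightarrow> 'y"
    and lam :: "nat \<Rightarrow> 'h" and \<mu> :: "nat \<Rightarrow> 'y"
  assumes A1: "bounded_linear A"
    and A2: "proper_fun f" "lsc_fun f" "c0 > 0" "strongly_convex_with f c0"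
    and A3: "densely_defined_closed_linear D W"
    and A4: "c1 > 0" "\<forall>z\<in>D. (norm (A z))\<^sup>2 + (norm (W z))\<^sup>2 \<ge> c1 * (norm z)\<^sup>2"
    and rho: "\<rho>1 > 0" "\<rho>2 > 0"
    and xstep: "\<And>k. x (Suc k) \<in> D \<and>
       (\<forall>z\<in>D. inner (lam k) (A (x (Suc k))) + inner (\<mu> k) (W (x (Suc k)))
                + \<rho>1 / 2 * (norm (A (x (Suc k)) - b))\<^sup>2
                + \<rho>2 / 2 * (norm (W (x (Suc k)) - y k))\<^sup>2
             \<le> inner (lam k) (A z) + inner (\<mu> k) (W z)
                + \<rho>1 / 2 * (norm (A z - b))\<^sup>2
                + \<rho>2 / 2 * (norm (W z - y k))\<^sup>2)"
    and ystep: "\<And>k v. f (y (Suc k))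
                 + ereal (- inner (\<mu> k) (y (Suc k)) + \<rho>2 / 2 * (norm (W (x (Suc k)) - y (Suc k)))\<^sup>2)
               \<le> f v + ereal (- inner (\<mu> k) v + \<rho>2 / 2 * (norm (W (x (Suc k)) - v))\<^sup>2)"
    and lstep: "\<And>k. lam (Suc k) = lam k + \<rho>1 *\<^sub>R (A (x (Suc k)) - b)"
    and mstep: "\<And>k. \<mu> (Suc k) = \<mu> k + \<rho>2 *\<^sub>R (W (x (Suc k)) - y (Suc k))"
  shows "(\<forall>k\<ge>1. admm_E A W b \<rho>1 \<rho>2 x y (Suc k) - admm_E A W b \<rho>1 \<rho>2 x y k
              \<le> - \<rho>1 * (norm (A (x (Suc k) - x k)))\<^sup>2 - 4 * c0 * (norm (y (Suc k) - y k))\<^sup>2)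
       \<and> (\<forall>k\<ge>1. admm_E A W b \<rho>1 \<rho>2 x y (Suc k) \<le> admm_E A W b \<rho>1 \<rho>2 x y k)
       \<and> (\<forall>m n. 1 \<le> m \<and> m < n \<longrightarrow>
            (\<Sum>k=m..n-1. (norm (y (Suc k) - y k))\<^sup>2) \<le> admm_E A W b \<rho>1 \<rho>2 x y m / (4 * c0)
          \<and> real (n - m) * \<rho>2 * (norm (y n - y (n - 1)))\<^sup>2
              \<le> (\<Sum>k=m+1..n. admm_E A W b \<rho>1 \<rho>2 x y k))"
  proof -
  let ?E = "admm_E A W b \<rho>1 \<rho>2 x y"
  from A3 have subD: "subspace D" and Wadd: "\<And>u v. u\<in>D \<Longrightarrow> v\<in>D \<Longrightarrow> W (u + v) = W u + W v"
    and Wsc: "\<And>u c. u\<in>D \<Longrightarrow> W (c *\<^sub>R u) = c *\<^sub>R W u"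
    unfolding densely_defined_closed_linear_def by auto
  have Wlin2: "W (u + t *\<^sub>R h) = W u + t *\<^sub>R W h" if "u \<in> D" "h \<in> D" for u h t
    using that subD by (simp add: Wadd Wsc subspace_scale)
  have Wdiff: "W (u - v) = W u - W v" if "u \<in> D" "v \<in> D" for u v
    using Wlin2[OF that, of "-1"] by simp
  have AL: "linear A" using A1 bounded_linear.linear by blast
  have Alin: "A (u + t *\<^sub>R h) = A u + t *\<^sub>R A h" for u h t
    using linear_add[OF AL] linear_scale[OF AL] by simp
  have xD: "x (Suc k) \<in> D" for k using xstep by blast
  have foc: "inner (lam (Suc k)) (A h) + inner (\<mu> k + \<rho>2 *\<^sub>R (W (x (Suc k)) - y k)) (W h) = 0"
    if h: "h \<in> D" for k h
  proof -
    define u where "u = x (Suc k)"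
    define L where "L = inner (lam k) (A h) + inner (\<mu> k) (W h) + \<rho>1 * inner (A u - b) (A h)
        + \<rho>2 * inner (W u - y k) (W h)"
    define Q where "Q = \<rho>1/2 * (norm (A h))\<^sup>2 + \<rho>2/2*(norm (W h))\<^sup>2"
    have "\<forall>t. 0 \<le> t*L + t^2*Q"
    proof
      fix t
      have uD: "u \<in> D" using xD u_def by simp
      have zD: "u + t *\<^sub>R h \<in> D" using subD h uD by (simp add: subspace_add subspace_scale)
      have le: "inner (lam k) (A u) + inner (\<mu> k) (W u) + \<rho>1/2*(norm (A u - b))\<^sup>2 + \<rho>2/2*(norm (W u - y k))\<^sup>2
         \<le> inner (lam k) (A (u + t *\<^sub>R h)) + inner (\<mu> k) (W (u + t *\<^sub>R h))
           + \<rho>1/2*(norm (A (u + t *\<^sub>R h) - b))\<^sup>2 + \<rho>2/2*(norm (W (u + t *\<^sub>R h) - y k))\<^sup>2"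
        using bspec[OF conjunct2[OF xstep[of k]] zD] unfolding u_def .
      have e1: "A (u + t *\<^sub>R h) - b = (A u - b) + t *\<^sub>R A h" by (simp add: Alin)
      have e2: "W (u + t *\<^sub>R h) - y k = (W u - y k) + t *\<^sub>R W h" by (simp add: Wlin2[OF uD h])
      have e3: "inner (lam k) (A (u + t *\<^sub>R h)) = inner (lam k) (A u) + t * inner (lam k) (A h)"
        by (simp add: Alin inner_add_right)
      have e4: "inner (\<mu> k) (W (u + t *\<^sub>R h)) = inner (\<mu> k) (W u) + t * inner (\<mu> k) (W h)"
        by (simp add: Wlin2[OF uD h] inner_add_right)
      from le show "0 \<le> t*L + t^2*Q"
        unfolding e1 e2 e3 e4 norm_add_scale L_def Q_def by (simp add: algebra_simps)
    qed
    then have "L = 0" by (rule quad_zero)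
    then show ?thesis
      by (simp add: lstep inner_add_left u_def L_def algebra_simps)
  qed
  obtain y0 where y0: "f y0 \<noteq> \<infinity>" using A2(1) unfolding proper_fun_def by auto
  have fin: "f (y (Suc j)) = ereal (real_of_ereal (f (y (Suc j))))" for j
  proof -
    have "f (y (Suc j)) + ereal (- inner (\<mu> j) (y (Suc j)) + \<rho>2 / 2 * (norm (W (x (Suc j)) - y (Suc j)))\<^sup>2)
      \<le> f y0 + ereal (- inner (\<mu> j) y0 + \<rho>2 / 2 * (norm (W (x (Suc j)) - y0))\<^sup>2)" by (rule ystep)
    moreover have "f y0 + ereal (- inner (\<mu> j) y0 + \<rho>2 / 2 * (norm (W (x (Suc j)) - y0))\<^sup>2) \<noteq> \<infinity>"
      using y0 by simp
    ultimately have "f (y (Suc j)) \<noteq> \<infinity>" by auto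
    moreover have "f (y (Suc j)) \<noteq> -\<infinity>" using A2(1) unfolding proper_fun_def by auto
    ultimately show ?thesis by (cases "f (y (Suc j))") auto
  qed
  have sub: "ereal (real_of_ereal (f (y (Suc j))) + inner (\<mu> (Suc j)) (v - y (Suc j))
      + c0 * (norm (v - y (Suc j)))\<^sup>2) \<le> f v" for j v
  proof (cases "f v = \<infinity>")
    case True then show ?thesis by simp
  next
    case False
    have "f v \<noteq> -\<infinity>" using A2(1) unfolding proper_fun_def by auto
    with False obtain fv where fv: "f v = ereal fv" by (cases "f v") auto
    define p where "p = y (Suc j)"
    define fp where "fp = real_of_ereal (f p)"
    have fp: "f p = ereal fp" using fin[of j] by (simp add: p_def fp_def)
    define z where "z = W (x (Suc j))"
    define N where "N = (norm (v - p))\<^sup>2"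
    define G where "G = fv - fp - inner (\<mu> (Suc j)) (v - p) - c0 * N"
    have "0 \<le> G + t * ((c0 + \<rho>2/2) * N)" if t: "0 < t" "t \<le> 1" for t
    proof -
      define w where "w = t *\<^sub>R v + (1 - t) *\<^sub>R p"
      have sc: "f w + ereal (c0 * t * (1 - t) * N) \<le> ereal t * f v + ereal (1 - t) * f p"
        using A2(4)[unfolded strongly_convex_with_def, rule_format, of t v p] t unfolding w_def N_def by simp
      hence sc': "f w + ereal (c0 * t * (1 - t) * N) \<le> ereal (t * fv + (1 - t) * fp)"
        by (simp add: fv fp)
      have "f w \<noteq> \<infinity>" using sc' by auto
      moreover have "f w \<noteq> -\<infinity>" using A2(1) unfolding proper_fun_def by auto
      ultimately obtain fw where fw: "f w = ereal fw" by (cases "f w") auto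
      have i1: "fw + c0 * t * (1 - t) * N \<le> t * fv + (1 - t) * fp" using sc' fw by simp
      have ys: "f p + ereal (- inner (\<mu> j) p + \<rho>2 / 2 * (norm (z - p))\<^sup>2)
               \<le> f w + ereal (- inner (\<mu> j) w + \<rho>2 / 2 * (norm (z - w))\<^sup>2)"
        using ystep[of j w] unfolding p_def z_def .
      hence i2: "fp - inner (\<mu> j) p + \<rho>2 / 2 * (norm (z - p))\<^sup>2 \<le> fw - inner (\<mu> j) w + \<rho>2 / 2 * (norm (z - w))\<^sup>2"
        using fp fw by simp
      have wz: "z - w = (z - p) + (-t) *\<^sub>R (v - p)" unfolding w_def by (simp add: algebra_simps)
      have nz: "(norm (z - w))\<^sup>2 = (norm (z - p))\<^sup>2 - 2 * t * inner (z - p) (v - p) + t^2 * N"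
        unfolding wz norm_add_scale N_def by simp
      have iw: "inner (\<mu> j) w = inner (\<mu> j) p + t * inner (\<mu> j) (v - p)"
        unfolding w_def by (simp add: inner_add_right inner_diff_right algebra_simps)
      have mu: "inner (\<mu> (Suc j)) (v - p) = inner (\<mu> j) (v - p) + \<rho>2 * inner (z - p) (v - p)"
        by (simp add: mstep z_def p_def inner_add_left)
      have "0 \<le> t * (G + t * ((c0 + \<rho>2/2) * N))"
        using i1 i2 unfolding nz iw G_def mu by (simp add: algebra_simps power2_eq_square)
      with t show ?thesis by (simp add: zero_le_mult_iff)
    qed
    moreover have "0 \<le> (c0 + \<rho>2/2) * N" using A2(3) rho by (simp add: N_def)
    ultimately have "0 \<le> G" by (rule small_lim)
    then show ?thesis by (simp add: fv G_def N_def fp_def p_def)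
  qed
  have mono: "2*c0*(norm (y (Suc k) - y k))\<^sup>2 \<le> \<rho>2 * inner (W (x (Suc k)) - y (Suc k)) (y (Suc k) - y k)"
    if k1: "k \<ge> 1" for k
  proof -
    obtain j where k: "k = Suc j" using k1 by (cases k) auto
    define fk where "fk = real_of_ereal (f (y k))"
    define fk1 where "fk1 = real_of_ereal (f (y (Suc k)))"
    have s1: "ereal (fk + inner (\<mu> k) (y (Suc k) - y k) + c0 * (norm (y (Suc k) - y k))\<^sup>2) \<le> ereal fk1"
      using sub[of j "y (Suc k)"] fin[of k] unfolding k fk_def fk1_def by simp
    have s2: "ereal (fk1 + inner (\<mu> (Suc k)) (y k - y (Suc k)) + c0 * (norm (y k - y (Suc k)))\<^sup>2) \<le> ereal fk"
      using sub[of k "y k"] fin[of j] unfolding k fk_def fk1_def by simp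
    have n: "norm (y k - y (Suc k)) = norm (y (Suc k) - y k)" by (rule norm_minus_commute)
    have ii: "inner (\<mu> (Suc k)) (y k - y (Suc k)) = - inner (\<mu> (Suc k)) (y (Suc k) - y k)"
      by (simp add: inner_diff_right)
    have "inner (\<mu> (Suc k)) (y (Suc k) - y k) = inner (\<mu> k) (y (Suc k) - y k)
          + \<rho>2 * inner (W (x (Suc k)) - y (Suc k)) (y (Suc k) - y k)"
      by (simp add: mstep inner_add_left)
    then show ?thesis using s1 s2 n ii by simp
  qed
  have step1: "?E (Suc k) - ?E k \<le> - \<rho>1 * (norm (A (x (Suc k) - x k)))\<^sup>2 - 4 * c0 * (norm (y (Suc k) - y k))\<^sup>2"
    if k1: "k \<ge> 1" for k
  proof -
    obtain j where k: "k = Suc j" using k1 by (cases k) auto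
    define h where "h = x (Suc k) - x k"
    have hD: "h \<in> D" using xD[of k] xD[of j] subD unfolding h_def k by (simp add: subspace_diff)
    define r1 where "r1 = A (x (Suc k)) - b"
    define r0 where "r0 = A (x k) - b"
    define a where "a = W (x (Suc k)) - y (Suc k)"
    define b' where "b' = W (x k) - y k"
    define c where "c = y (Suc k) - y k"
    define e where "e = y k - y j"
    have Ah: "A h = r1 - r0" unfolding h_def r1_def r0_def by (simp add: linear_diff[OF AL])
    have Wh: "W h = a - b' + c" unfolding h_def a_def b'_def c_def
      using Wdiff[OF xD[of k]] xD[of j] k by simp
    have lamd: "lam (Suc k) = lam k + \<rho>1 *\<^sub>R r1" by (simp add: lstep r1_def)
    have mud: "\<mu> k + \<rho>2 *\<^sub>R (W (x (Suc k)) - y k) = (\<mu> j + \<rho>2 *\<^sub>R (W (x k) - y j)) + \<rho>2 *\<^sub>R (a + c - e)"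
      unfolding k mstep a_def c_def e_def by (simp add: algebra_simps)
    have H1: "\<rho>1 * inner r1 (r1 - r0) + \<rho>2 * inner (a + c - e) (a - b' + c) = 0"
      using foc[OF hD, of k] foc[OF hD, of j] unfolding lamd mud Ah Wh k[symmetric]
      by (simp add: inner_add_left)
    have H2: "\<rho>2 * inner a c \<ge> 2*c0*(norm c)\<^sup>2" using mono[OF k1] unfolding a_def c_def .
    have "\<rho>1*(norm r1)\<^sup>2 + \<rho>2*(norm a)\<^sup>2 + \<rho>2*(norm c)\<^sup>2 - (\<rho>1*(norm r0)\<^sup>2 + \<rho>2*(norm b')\<^sup>2 + \<rho>2*(norm e)\<^sup>2)
     \<le> - \<rho>1*(norm (r1 - r0))\<^sup>2 - 4*c0*(norm c)\<^sup>2" by (rule key_alg[OF H1 H2 rho(2)])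
    then show ?thesis unfolding admm_E_def Ah[unfolded h_def] by (simp add: r1_def r0_def a_def b'_def c_def e_def k)
  qed
  have step2: "?E (Suc k) \<le> ?E k" if "k \<ge> 1" for k
  proof -
    have "- \<rho>1 * (norm (A (x (Suc k) - x k)))\<^sup>2 - 4 * c0 * (norm (y (Suc k) - y k))\<^sup>2 \<le> 0"
    proof -
      have "0 \<le> \<rho>1 * (norm (A (x (Suc k) - x k)))\<^sup>2" using rho by simp
      moreover have "0 \<le> 4 * c0 * (norm (y (Suc k) - y k))\<^sup>2" using A2(3) by simp
      ultimately show ?thesis by linarith
    qed
    with step1[OF that] show ?thesis by linarith
  qed
  have Enn: "0 \<le> ?E k" for k using rho unfolding admm_E_def by simp
  have Emono: "?E (k + i) \<le> ?E k" if "k \<ge> 1" for k i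
  proof (induction i)
    case (Suc i) then show ?case using step2[of "k + i"] that by simp
  qed simp
  have tele: "(\<Sum>k=m..m+i. 4 * c0 * (norm (y (Suc k) - y k))\<^sup>2) \<le> ?E m - ?E (Suc (m + i))"
    if "m \<ge> 1" for m i
  proof (induction i)
    case 0
    have "0 \<le> \<rho>1 * (norm (A (x (Suc m) - x m)))\<^sup>2" using rho by simp
    then show ?case using step1[OF that] by simp
  next
    case (Suc i)
    have "(\<Sum>k=m..m+Suc i. 4 * c0 * (norm (y (Suc k) - y k))\<^sup>2)
        = (\<Sum>k=m..m+i. 4 * c0 * (norm (y (Suc k) - y k))\<^sup>2) + 4 * c0 * (norm (y (Suc (m + Suc i)) - y (m + Suc i)))\<^sup>2"
      by simp
    moreover have "?E (Suc (m + Suc i)) - ?E (m + Suc i) \<le> - 4 * c0 * (norm (y (Suc (m + Suc i)) - y (m + Suc i)))\<^sup>2"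
    proof -
      have "0 \<le> \<rho>1 * (norm (A (x (Suc (m + Suc i)) - x (m + Suc i))))\<^sup>2" using rho by simp
      then show ?thesis using step1[of "m + Suc i"] that by simp
    qed
    ultimately show ?case using Suc by simp
  qed
  show ?thesis
  proof (intro conjI allI impI)
    show "\<And>k. 1 \<le> k \<Longrightarrow> ?E (Suc k) - ?E k \<le> - \<rho>1 * (norm (A (x (Suc k) - x k)))\<^sup>2 - 4 * c0 * (norm (y (Suc k) - y k))\<^sup>2"
      by (rule step1)
    show "\<And>k. 1 \<le> k \<Longrightarrow> ?E (Suc k) \<le> ?E k" by (rule step2)
  next
    fix m n :: nat assume mn: "1 \<le> m \<and> m < n"
    then obtain i where n: "n = Suc (m + i)" by (metis less_iff_Suc_add)
    have "(\<Sum>k=m..n-1. 4 * c0 * (norm (y (Suc k) - y k))\<^sup>2) \<le> ?E m"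
      using tele[of m i] mn Enn[of n] n by simp
    hence "4 * c0 * (\<Sum>k=m..n-1. (norm (y (Suc k) - y k))\<^sup>2) \<le> ?E m"
      by (simp add: sum_distrib_left mult.assoc)
    then show "(\<Sum>k=m..n-1. (norm (y (Suc k) - y k))\<^sup>2) \<le> ?E m / (4 * c0)"
      using A2(3) by (simp add: field_simps)
  next
    fix m n :: nat assume mn: "1 \<le> m \<and> m < n"
    have "\<rho>2 * (norm (y n - y (n - 1)))\<^sup>2 \<le> ?E k" if "k \<in> {m+1..n}" for k
    proof -
      have "?E n \<le> ?E k" using Emono[of k "n - k"] that mn by simp
      moreover have "\<rho>2 * (norm (y n - y (n - 1)))\<^sup>2 \<le> ?E n" using rho unfolding admm_E_def by simp
      ultimately show ?thesis by linarith
    qed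
    hence "(\<Sum>k=m+1..n. \<rho>2 * (norm (y n - y (n - 1)))\<^sup>2) \<le> (\<Sum>k=m+1..n. ?E k)"
      by (rule sum_mono)
    then show "real (n - m) * \<rho>2 * (norm (y n - y (n - 1)))\<^sup>2 \<le> (\<Sum>k=m+1..n. ?E k)"
      by (simp add: mult.assoc)
  qed
qed

end
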